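(* Let $N\ge 0$, $k\ge1$ be integers and $f:\{0,\dots,N\}^k\to\{\mathbf{true},\mathbf{false}\}$ a feasibility function, and run $\textsc{ParetoEnumerate}(N,k,f)$ (with arbitrary choices of the picked element in each iteration). For a set $S$ let $D(S)=\{\vec z\in\{0,\dots,N\}^k : \vec z\le_k \vec y \text{ for some } \vec y\in S\}$. In every iteration of the main loop, if $S$ denotes the set before and $S^{\mathrm{new}}$ the set after the iteration, then $D(S^{\mathrm{new}})\subseteq D(S)$ and $D(S^{\mathrm{new}})\neq D(S)$, i.e., $D(S)$ shrinks by at least one point per iteration.
   Context: For $\vec x,\vec x'\in\{0,\dots,N\}^k$, $\vec x\le_k\vec x'$ iff $x_i\le x'_i$ for all $i$; $\vec x$ is smaller than $\vec x'$ (and $\vec x'$ greater than $\vec x$) if $\vec x\le_k\vec x'$ and $\vec x\neq\vec x'$. A feasibility function is a monotone $f:\{0,\dots,N\}^k\to\{\mathbf{true},\mathbf{false}\}$: if $f(\vec x)=\mathbf{true}$ then $f(\vec x')=\mathbf{true}$ for all $\vec x'$ greater than $\vec x$. A Pareto point of $f$ is an $\vec x$ with $f(\vec x)=\mathbf{true}$ and $f(\vec x')=\mathbf{false}$ for all $\vec x'$ smaller than $\vec x$. Procedure $\textsc{SearchParetoPoint}(\vec x,k,f)$: for $i=1,\dots,k$: set $\mathit{max}:=x_i+1$, $\mathit{min}:=0$; while $\mathit{max}-\mathit{min}>1$: $\mathit{mid}:=\mathit{min}+\lfloor(\mathit{max}-\mathit{min}-1)/2\rfloor$, $x_i:=\mathit{mid}$,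 and if $f(\vec x)=\mathbf{true}$ then $\mathit{max}:=\mathit{mid}+1$ else $\mathit{min}:=\mathit{mid}+1$; then $x_i:=\mathit{min}$. Return $\vec x$. Procedure $\textsc{ParetoEnumerate}(N,k,f)$: initialize $S:=\{(N,\dots,N)\}$ and $P:=\emptyset$. Main loop: while $S\neq\emptyset$: pick (without removing) some $\vec x\in S$; if $f(\vec x)=\mathbf{true}$, then set $\vec x:=\textsc{SearchParetoPoint}(\vec x,k,f)$, set $P:=P\cup\{\vec x\}$, set $S':=\emptyset$, and for each $\vec y\in S$: if not $\vec x\le_k\vec y$, add $\vec y$ to $S'$; otherwise, for each $i\in\{1,\dots,k\}$ with $x_i>0$, add $(y_1,\dots,y_{i-1},x_i-1,y_{i+1},\dots,y_k)$ to $S'$; then set $S$ to the set of elements of $S'$ that are not smaller than any other element of $S'$. Otherwise (if $f(\vec x)=\mathbf{false}$), set $S:=S\setminus\{\vec x\}$. When the loop ends, return $P$. *)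

theory Defs
  imports Main
begin

text \<open>Vectors in {0..N}^k are represented as lists of naturals of length k with all
  entries at most N; coordinate i of the paper (1-based) is list index i-1.\<close>

definition grid :: "nat \<Rightarrow> nat \<Rightarrow> nat list set" where
  "grid N k = {x. length x = k \<and> (\<forall>i<k. x ! i \<le> N)}"

definition vle :: "nat list \<Rightarrow> nat list \<Rightarrow> bool" where
  "vle x y \<longleftrightarrow> length x = length y \<and> (\<forall>i<length x. x ! i \<le> y ! i)"

definition smaller :: "nat list \<Rightarrow> nat list \<Rightarrow> bool" where
  "smaller x y \<longleftrightarrow> vle x y \<and> x \<noteq> y"

definition feasibility :: "nat \<Rightarrow> nat \<Rightarrow> (nat list \<Rightarrow> bool) \<Rightarrow> bool" where
  "feasibility N k f \<longleftrightarrow>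
     (\<forall>x\<in>grid N k. \<forall>x'\<in>grid N k. f x \<longrightarrow> smaller x x' \<longrightarrow> f x')"

function bsearch :: "(nat list \<Rightarrow> bool) \<Rightarrow> nat list \<Rightarrow> nat \<Rightarrow> nat \<Rightarrow> nat \<Rightarrow> nat" where
  "bsearch f x i mn mx =
     (if mx - mn > 1 then
        (let mid = mn + (mx - mn - 1) div 2 in
          if f (x[i := mid]) then bsearch f x i mn (mid + 1)
          else bsearch f x i (mid + 1) mx)
      else mn)"
  by pat_completeness auto
termination
  by (relation "measure (\<lambda>(f, x, i, mn, mx). mx - mn)") (auto simp: Let_def)

definition search_pareto_point :: "nat list \<Rightarrow> nat \<Rightarrow> (nat list \<Rightarrow> bool) \<Rightarrow> nat list" where
  "search_pareto_point x k f =
     foldl (\<lambda>v i. v[i := bsearch f v i 0 (v ! i + 1)]) x [0..<k]"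

definition update_S :: "nat \<Rightarrow> nat list \<Rightarrow> nat list set \<Rightarrow> nat list set" where
  "update_S k x S =
     (let S' = {y\<in>S. \<not> vle x y} \<union>
               {y[i := x ! i - 1] | y i. y \<in> S \<and> vle x y \<and> i < k \<and> x ! i > 0}
      in {y\<in>S'. \<not> (\<exists>z\<in>S'. smaller y z)})"

text \<open>One iteration of the main loop of ParetoEnumerate (nondeterministic choice of x).\<close>
inductive pe_step :: "nat \<Rightarrow> (nat list \<Rightarrow> bool) \<Rightarrow>
    nat list set \<times> nat list set \<Rightarrow> nat list set \<times> nat list set \<Rightarrow> bool"
  for k f where
  feasible: "\<lbrakk>x \<in> S; f x; x' = search_pareto_point x k f\<rbrakk>
     \<Longrightarrow> pe_step k f (S, P) (update_S k x' S, P \<union> {x'})"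
| infeasible: "\<lbrakk>x \<in> S; \<not> f x\<rbrakk> \<Longrightarrow> pe_step k f (S, P) (S - {x}, P)"

definition pe_init :: "nat \<Rightarrow> nat \<Rightarrow> nat list set \<times> nat list set" where
  "pe_init N k = ({replicate k N}, {})"

definition down :: "nat \<Rightarrow> nat \<Rightarrow> nat list set \<Rightarrow> nat list set" where
  "down N k S = {z\<in>grid N k. \<exists>y\<in>S. vle z y}"

end

theory Submission
  imports Defs
begin

declare bsearch.simps[simp del]

lemma bsearch_lt: "mn < mx \<Longrightarrow> bsearch f x i mn mx < mx"
proof (induction f x i mn mx rule: bsearch.induct)
  case (1 f x i mn mx)
  show ?case
  proof (cases "mx - mn > 1")
    case True
    define mid where "mid = mn + (mx - mn - 1) div 2"
    have a: "mn < mid + 1" "mid + 1 \<le> mx" "mid + 1 < mx \<or> mid + 1 = mx" using True unfolding mid_def by auto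
    show ?thesis
    proof (cases "f (x[i := mid])")
      case T: True
      have "bsearch f x i mn (mid + 1) < mid + 1"
        using 1(1)[OF True mid_def T] a by simp
      moreover have "bsearch f x i mn mx = bsearch f x i mn (mid + 1)"
        using True T by (subst bsearch.simps) (simp add: Let_def mid_def)
      ultimately show ?thesis using a by simp
    next
      case F: False
      show ?thesis
      proof (cases "mid + 1 < mx")
        case True2: True
        have "bsearch f x i (mid+1) mx < mx"
          using 1(2)[OF True mid_def F True2] .
        moreover have "bsearch f x i mn mx = bsearch f x i (mid + 1) mx"
          using True F by (subst bsearch.simps) (simp add: Let_def mid_def)
        ultimately show ?thesis by simp
      next
        case False
        then show ?thesis using True unfolding mid_def by linarith
      qed
    qed
  next
    case False
    then show ?thesis using 1(3) by (subst bsearch.simps) simp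
  qed
qed

lemma vle_trans: "vle a b \<Longrightarrow> vle b c \<Longrightarrow> vle a c"
  unfolding vle_def by (metis order_trans)

lemma vle_refl: "vle a a" unfolding vle_def by simp

lemma foldl_le:
  "\<forall>i\<in>set js. i < length v \<Longrightarrow>
   vle (foldl (\<lambda>v i. v[i := bsearch f v i 0 (v ! i + 1)]) v js) v"
proof (induction js arbitrary: v)
  case Nil then show ?case by (simp add: vle_refl)
next
  case (Cons i js)
  let ?w = "v[i := bsearch f v i 0 (v ! i + 1)]"
  have "vle ?w v"
    using Cons.prems bsearch_lt[of 0 "v!i+1" f v i] unfolding vle_def
    by (auto simp: nth_list_update)
  moreover have "vle (foldl (\<lambda>v i. v[i := bsearch f v i 0 (v ! i + 1)]) ?w js) ?w"
    using Cons by simp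
  ultimately show ?case by (simp add: vle_trans)
qed

lemma spp_le: "length x = k \<Longrightarrow> vle (search_pareto_point x k f) x"
  unfolding search_pareto_point_def by (rule foldl_le) simp

definition inv where
  "inv N k S \<longleftrightarrow> S \<subseteq> grid N k \<and> (\<forall>a\<in>S. \<forall>b\<in>S. \<not> smaller a b)"

lemma update_sub:
  assumes "S \<subseteq> grid N k" "length x' = k"
  shows "\<forall>w\<in>update_S k x' S. (w \<in> S \<and> \<not> vle x' w) \<or>
     (\<exists>y i. w = y[i := x' ! i - 1] \<and> y \<in> S \<and> vle x' y \<and> i < k \<and> x' ! i > 0)"
  unfolding update_S_def Let_def by auto

lemma update_grid:
  assumes "S \<subseteq> grid N k" "length x' = k"
  shows "update_S k x' S \<subseteq> grid N k"
proof
  fix w assume w: "w \<in> update_S k x' S"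
  show "w \<in> grid N k"
  proof (cases "w \<in> S")
    case True then show ?thesis using assms by auto
  next
    case False
    then obtain y i where h: "w = y[i := x' ! i - 1]" "y \<in> S" "vle x' y" "i < k"
      using update_sub[OF assms] w by blast
    have "y \<in> grid N k" using h assms by auto
    then show "w \<in> grid N k" using h unfolding grid_def vle_def
      by (auto simp: nth_list_update) (metis diff_le_self le_trans)
  qed
qed

lemma update_anti: "\<forall>a\<in>update_S k x' S. \<forall>b\<in>update_S k x' S. \<not> smaller a b"
  unfolding update_S_def Let_def by auto

lemma inv_step:
  assumes "pe_step k f (S, P) (S', P')" "inv N k S"
  shows "inv N k S'"
  using assms(1)
proof cases
  case (feasible x)
  have "x \<in> grid N k" using feasible assms(2) unfolding inv_def by auto
  then have "length x = k" unfolding grid_def by auto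
  then have "length (search_pareto_point x k f) = k"
    using spp_le unfolding vle_def by metis
  then show ?thesis using feasible assms(2) update_grid update_anti unfolding inv_def by metis
next
  case (infeasible x)
  then show ?thesis using assms(2) unfolding inv_def by auto
qed

lemma inv_reach:
  assumes "(pe_step k f)\<^sup>*\<^sup>* (pe_init N k) (S, P)"
  shows "inv N k S"
proof -
  have "\<And>a b. (pe_step k f)\<^sup>*\<^sup>* a b \<Longrightarrow> inv N k (fst a) \<Longrightarrow> inv N k (fst b)"
  proof -
    fix a b assume "(pe_step k f)\<^sup>*\<^sup>* a b" "inv N k (fst a)"
    then show "inv N k (fst b)"
    proof (induction rule: rtranclp_induct)
      case base then show ?case .
    next
      case (step y z)
      then show ?case using inv_step[of k f "fst y" "snd y" "fst z" "snd z"] by simp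
    qed
  qed
  moreover have "inv N k {replicate k N}"
    unfolding inv_def grid_def smaller_def by auto
  ultimately show ?thesis using assms unfolding pe_init_def by fastforce
qed

theorem lemma3:
  fixes N k :: nat and f :: "nat list \<Rightarrow> bool"
    and S P S' P' :: "nat list set"
  assumes "k \<ge> 1"
    and "feasibility N k f"
    and "(pe_step k f)\<^sup>*\<^sup>* (pe_init N k) (S, P)"
    and "pe_step k f (S, P) (S', P')"
  shows "down N k S' \<subseteq> down N k S \<and> down N k S' \<noteq> down N k S"
proof -
  have I: "inv N k S" using inv_reach assms(3) .
  show ?thesis
  using assms(4)
  proof cases
    case (feasible x)
    define x' where "x' = search_pareto_point x k f"
    have xg: "x \<in> grid N k" using feasible I unfolding inv_def by auto
    then have lx: "length x = k" unfolding grid_def by auto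
    have x'x: "vle x' x" using spp_le[OF lx] unfolding x'_def .
    have lx': "length x' = k" using x'x lx unfolding vle_def by auto
    have x'g: "x' \<in> grid N k" using x'x xg lx' unfolding vle_def grid_def by (auto intro: le_trans)
    have SN: "S' = update_S k x' S" using feasible x'_def by simp
    have Sg: "S \<subseteq> grid N k" using I unfolding inv_def by auto
    note U = update_sub[OF Sg lx']
    have sub: "down N k S' \<subseteq> down N k S"
    proof
      fix z assume "z \<in> down N k S'"
      then obtain w where zg: "z \<in> grid N k" and w: "w \<in> S'" "vle z w" unfolding down_def by auto
      from U w(1) SN have "\<exists>y\<in>S. vle w y"
      proof (elim ballE disjE exE conjE)
        fix y i assume h: "w = y[i := x' ! i - 1]" "y \<in> S" "vle x' y" "i < k"
        have "vle w y" using h lx' unfolding vle_def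
          by (auto simp: nth_list_update intro: le_trans)
        then show ?thesis using h by auto
      qed (use vle_refl in blast)+
      then show "z \<in> down N k S" using zg w vle_trans unfolding down_def by blast
    qed
    have "x' \<in> down N k S" using x'g x'x feasible unfolding down_def by auto
    moreover have "x' \<notin> down N k S'"
    proof
      assume "x' \<in> down N k S'"
      then obtain w where w: "w \<in> S'" "vle x' w" unfolding down_def by auto
      from U w(1) SN show False
      proof (elim ballE disjE exE conjE)
        fix y i assume h: "w = y[i := x' ! i - 1]" "y \<in> S" "vle x' y" "i < k" "x' ! i > 0"
        have "length y = k" using h(3) lx' unfolding vle_def by auto
        then have "w ! i = x' ! i - 1" using h by simp
        then show False using w(2) h lx' unfolding vle_def by force
      next
        assume "\<not> vle x' w"
        then show False using w by simp
      qed (use w SN in auto)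
    qed
    ultimately show ?thesis using sub by blast
  next
    case (infeasible x)
    have "x \<in> down N k S" using infeasible I unfolding inv_def down_def using vle_refl by blast
    moreover have "x \<notin> down N k S'"
      using infeasible I unfolding inv_def down_def smaller_def by auto
    moreover have "down N k S' \<subseteq> down N k S" using infeasible unfolding down_def by auto
    ultimately show ?thesis by blast
  qed
qed

end
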